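(* Let $n\ge 1$ be an integer. For real numbers $a_1,\dots,a_n$ with $\sum_{j=1}^n a_j=1$ put $$C(t)=\sum_{j=1}^n a_j\cos jt,\qquad S(t)=\sum_{j=1}^n a_j\sin jt .$$ Let $$I=\sup_{a_1,\dots,a_n}\ \min_{t\in\mathbb R}\{C(t):\ S(t)=0\},$$ where the supremum is over all real $a_1,\dots,a_n$ with $\sum_{j=1}^n a_j=1$. Then $$I=-\tan^2\frac{\pi}{2(n+1)}.$$
   Context: $C$ and $S$ are called a pair of conjugate trigonometric polynomials. The set $\{t: S(t)=0\}$ is nonempty (it contains $0$ and $\pi$), so the inner minimum is taken over a nonempty closed set. *)

theory Defs
  imports "HOL-Analysis.Analysis"
begin

definition Cpoly :: "nat \<Rightarrow> (nat \<Rightarrow> real) \<Rightarrow> real \<Rightarrow> real" where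
  "Cpoly n a t = (\<Sum>j=1..n. a j * cos (real j * t))"

definition Spoly :: "nat \<Rightarrow> (nat \<Rightarrow> real) \<Rightarrow> real \<Rightarrow> real" where
  "Spoly n a t = (\<Sum>j=1..n. a j * sin (real j * t))"

text \<open>min over t with S(t) = 0 of C(t) (the minimum is attained; Inf equals it).\<close>
definition min_C_on_zeros :: "nat \<Rightarrow> (nat \<Rightarrow> real) \<Rightarrow> real" where
  "min_C_on_zeros n a = Inf {Cpoly n a t | t. Spoly n a t = 0}"

end

theory Submission imports Defs "HOL-Computational_Algebra.Polynomial" begin

fun cheb :: "nat \<Rightarrow> real poly" where
  "cheb 0 = 1"
| "cheb (Suc 0) = [:0,1:]"
| "cheb (Suc (Suc k)) = [:0,2:] * cheb (Suc k) - cheb k"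

lemma cheb_cos: "poly (cheb k) (cos u) = cos (real k * u)"
proof (induction k rule: cheb.induct)
  case 1 then show ?case by simp
next
  case 2 then show ?case by simp
next
  case (3 k)
  have "cos (real (Suc (Suc k)) * u) = 2 * cos u * cos (real (Suc k) * u) - cos (real k * u)"
  proof -
    have a: "real (Suc (Suc k)) * u = real (Suc k) * u + u" by (simp add: algebra_simps)
    have b: "real k * u = real (Suc k) * u - u" by (simp add: algebra_simps)
    show ?thesis unfolding a b cos_add cos_diff by (simp add: algebra_simps)
  qed
  then show ?case using 3 by (simp add: algebra_simps)
qed

lemma cheb_neg: "poly (cheb k) (- x) = (-1)^k * poly (cheb k) x"
proof (induction k rule: cheb.induct)
  case (3 k)
  then show ?case by (simp add: algebra_simps)
qed auto

lemma cheb_deg: "degree (cheb k) \<le> k \<and> coeff (cheb k) k = (if k = 0 then 1 else 2^(k-1))"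
proof (induction k rule: cheb.induct)
  case 1 then show ?case by simp
next
  case 2 then show ?case by simp
next
  case (3 k)
  have d1: "degree ([:0,2:] * cheb (Suc k)) \<le> Suc (Suc k)"
    using 3 degree_mult_le[of "[:0,2:]" "cheb (Suc k)"] by simp
  have d2: "degree (cheb k) \<le> Suc (Suc k)" using 3 by simp
  have c2: "coeff (cheb k) (Suc (Suc k)) = 0" using 3 by (simp add: coeff_eq_0)
  have c1: "coeff ([:0,2:] * cheb (Suc k)) (Suc (Suc k)) = 2 * coeff (cheb (Suc k)) (Suc k)"
    by (simp add: mult_pCons_left)
  show ?case using d1 d2 c1 c2 3
    by (auto simp: degree_diff_le)
qed

lemma poly_roots_prod:
  fixes p :: "real poly"
  assumes "finite R" "card R = degree p" "\<forall>r\<in>R. poly p r = 0"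
  shows "poly p x = lead_coeff p * (\<Prod>r\<in>R. x - r)"
  using assms
proof (induction R arbitrary: p rule: finite_induct)
  case empty
  then obtain c where "p = [:c:]" by (metis degree_0_id card.empty)
  then show ?case by simp
next
  case (insert r R)
  have "poly p r = 0" using insert by simp
  then obtain q where pq: "p = [:-r,1:] * q" using poly_eq_0_iff_dvd by (metis dvdE)
  have "p \<noteq> 0" using insert by auto
  then have "q \<noteq> 0" using pq by auto
  have dq: "degree p = Suc (degree q)" unfolding pq using \<open>q \<noteq> 0\<close> by (subst degree_mult_eq) auto
  have "card R = degree q" using insert dq by simp
  moreover have "\<forall>s\<in>R. poly q s = 0"
  proof
    fix s assume "s \<in> R"
    then have "s \<noteq> r" "poly p s = 0" using insert by auto
    then show "poly q s = 0" using pq by simp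
  qed
  ultimately have e0: "poly q x = lead_coeff q * (\<Prod>s\<in>R. x - s)" using insert.IH insert.hyps by blast
  have e2: "lead_coeff p = lead_coeff q" unfolding pq lead_coeff_mult by simp
  have e1: "poly p x = (x - r) * poly q x" unfolding pq by (simp add: algebra_simps)
  have e3: "(\<Prod>s\<in>insert r R. x - s) = (x - r) * (\<Prod>s\<in>R. x - s)" using insert.hyps by simp
  show ?case unfolding e1 e0 e2 e3 by (simp add: algebra_simps)
qed

lemma sym_roots_poly1:
  fixes p :: "real poly" and v :: "nat \<Rightarrow> real"
  assumes fin: "finite I" and inj: "inj_on v I" and pos: "\<forall>i\<in>I. v i > 0"
    and cI: "card I = N div 2" and dp: "degree p = N"
    and par: "\<forall>x. poly p (-x) = (-1)^N * poly p x"
    and rt: "\<forall>i\<in>I. poly p (v i) = 0"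
  shows "poly p 1 = lead_coeff p * (\<Prod>i\<in>I. 1 - (v i)^2)"
proof -
  define A where "A = v ` I"
  define B where "B = (\<lambda>i. - v i) ` I"
  define Z where "Z = (if odd N then {0::real} else {})"
  define R where "R = A \<union> B \<union> Z"
  have injB: "inj_on (\<lambda>i. - v i) I" using inj by (auto simp: inj_on_def)
  have cA: "card A = N div 2" using inj cI by (simp add: A_def card_image)
  have cB: "card B = N div 2" using injB cI by (simp add: B_def card_image)
  have nn: "v i \<noteq> - v j" if "i \<in> I" "j \<in> I" for i j
    using pos that by (metis neg_0_less_iff_less not_less_iff_gr_or_eq)
  have dAB: "A \<inter> B = {}" using nn unfolding A_def B_def by blast
  have nz: "v i \<noteq> 0" "- v i \<noteq> 0" if "i \<in> I" for i using pos that by auto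
  have dABZ: "(A \<union> B) \<inter> Z = {}" using nz unfolding A_def B_def Z_def by auto
  have fA: "finite A" "finite B" "finite Z" using fin by (auto simp: A_def B_def Z_def)
  have cR: "card R = N"
  proof -
    have "card R = card (A \<union> B) + card Z" unfolding R_def
      using dABZ fA by (simp add: card_Un_disjoint)
    also have "card (A \<union> B) = card A + card B" using dAB fA by (simp add: card_Un_disjoint)
    finally show ?thesis using cA cB by (simp add: Z_def) presburger
  qed
  have rR: "\<forall>r\<in>R. poly p r = 0"
  proof
    fix r assume "r \<in> R"
    then consider "r \<in> A" | "r \<in> B" | "r \<in> Z" unfolding R_def by blast
    then show "poly p r = 0"
    proof cases
      case 1 then show ?thesis using rt by (auto simp: A_def)
    next
      case 2 then show ?thesis using rt par by (auto simp: B_def)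
    next
      case 3
      then have "odd N" "r = 0" by (auto simp: Z_def split: if_splits)
      then show ?thesis using par[rule_format, of 0] by simp
    qed
  qed
  have "poly p 1 = lead_coeff p * (\<Prod>r\<in>R. 1 - r)"
    using poly_roots_prod[of R p 1] fA cR dp rR by (simp add: R_def)
  also have "(\<Prod>r\<in>R. 1 - r) = (\<Prod>r\<in>A. 1 - r) * (\<Prod>r\<in>B. 1 - r) * (\<Prod>r\<in>Z. 1 - r)"
    unfolding R_def using fA dAB dABZ by (simp add: prod.union_disjoint)
  also have "(\<Prod>r\<in>Z. 1 - r) = 1" by (simp add: Z_def)
  also have "(\<Prod>r\<in>A. 1 - r) = (\<Prod>i\<in>I. 1 - v i)" unfolding A_def using inj by (simp add: prod.reindex)
  also have "(\<Prod>r\<in>B. 1 - r) = (\<Prod>i\<in>I. 1 + v i)" unfolding B_def using injB by (simp add: prod.reindex)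
  also have "(\<Prod>i\<in>I. 1 - v i) * (\<Prod>i\<in>I. 1 + v i) * 1 = (\<Prod>i\<in>I. 1 - (v i)^2)"
    by (simp add: prod.distrib[symmetric] power2_eq_square algebra_simps)
  finally show ?thesis .
qed

lemma cheb_lead: "degree (cheb k) = k" "lead_coeff (cheb k) = (if k = 0 then 1 else 2^(k-1))"
proof -
  have "coeff (cheb k) k \<noteq> 0" using cheb_deg[of k] by simp
  then have "degree (cheb k) \<ge> k" by (simp add: le_degree)
  then show "degree (cheb k) = k" using cheb_deg[of k] by simp
  then show "lead_coeff (cheb k) = (if k = 0 then 1 else 2^(k-1))" using cheb_deg[of k] by simp
qed

lemma cheb_one: "poly (cheb k) 1 = 1"
  using cheb_cos[of k 0] by simp

lemma cos_odd_half_pi: "cos ((2 * real k + 1) * pi / 2) = 0"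
proof -
  have e: "(2 * real k + 1) * pi / 2 = real k * pi + pi/2" by (simp add: algebra_simps)
  show ?thesis unfolding e by (simp add: cos_add)
qed


lemma cheb_prod:
  assumes "N \<ge> 1"
  shows "2^(N-1) * (\<Prod>k<N div 2. 1 - (cos ((2 * real k + 1) * pi / (2 * real N)))^2) = 1"
proof -
  define v where "v k = cos ((2 * real k + 1) * pi / (2 * real N))" for k
  have ang: "0 < (2 * real k + 1) * pi / (2 * real N) \<and> (2 * real k + 1) * pi / (2 * real N) < pi/2"
    if "k < N div 2" for k
  proof -
    have "2 * k + 1 < N" using that by linarith
    then have "2 * real k + 1 < real N" by linarith
    then have "(2 * real k + 1) * pi < real N * pi" by simp
    moreover have "real N > 0" using assms by simp
    moreover have "0 < (2 * real k + 1) * pi" by simp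
    ultimately show ?thesis by (simp add: field_simps)
  qed
  have pos: "\<forall>i\<in>{..<N div 2}. v i > 0"
  proof
    fix i assume i: "i \<in> {..<N div 2}"
    show "v i > 0" unfolding v_def by (rule cos_gt_zero) (use ang[of i] i in auto)
  qed
  have inj: "inj_on v {..<N div 2}"
  proof (rule inj_onI)
    fix x y assume xy: "x \<in> {..<N div 2}" "y \<in> {..<N div 2}" "v x = v y"
    have ax: "0 < (2 * real x + 1) * pi / (2 * real N)" "(2 * real x + 1) * pi / (2 * real N) < pi/2"
      using ang[of x] xy(1) by auto
    have ay: "0 < (2 * real y + 1) * pi / (2 * real N)" "(2 * real y + 1) * pi / (2 * real N) < pi/2"
      using ang[of y] xy(2) by auto
    have "(2 * real x + 1) * pi / (2 * real N) = (2 * real y + 1) * pi / (2 * real N)"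
      apply (rule cos_inj_pi)
      using ax ay pi_gt_zero apply linarith+
      using xy(3) by (simp add: v_def)
    then show "x = y" using assms by (simp add: field_simps)
  qed
  have rt: "\<forall>i\<in>{..<N div 2}. poly (cheb N) (v i) = 0"
  proof
    fix i assume "i \<in> {..<N div 2}"
    have e: "real N * ((2 * real i + 1) * pi / (2 * real N)) = (2 * real i + 1) * pi / 2"
      using assms by (simp add: field_simps)
    show "poly (cheb N) (v i) = 0" unfolding v_def cheb_cos e by (rule cos_odd_half_pi)
  qed
  have "poly (cheb N) 1 = lead_coeff (cheb N) * (\<Prod>i<N div 2. 1 - (v i)^2)"
  proof -
    have par: "\<forall>x. poly (cheb N) (-x) = (-1)^N * poly (cheb N) x" using cheb_neg by blast
    show ?thesis by (rule sym_roots_poly1[OF _ inj pos _ _ par rt]) (simp_all add: cheb_lead(1))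
  qed
  moreover have "lead_coeff (cheb N) = 2^(N-1)" using assms cheb_lead(2)[of N] by simp
  ultimately show ?thesis using cheb_one[of N] by (simp add: v_def)
qed

lemma C_zero: "Cpoly n a 0 = (\<Sum>j=1..n. a j)" by (simp add: Cpoly_def)
lemma S_zero: "Spoly n a 0 = 0" by (simp add: Spoly_def)
lemma S_pi: "Spoly n a pi = 0" by (simp add: Spoly_def)

lemma cont_C: "continuous_on A (\<lambda>u. Cpoly n a (2*u))"
  unfolding Cpoly_def by (intro continuous_intros)
lemma cont_S: "continuous_on A (\<lambda>u. Spoly n a (2*u))"
  unfolding Spoly_def by (intro continuous_intros)

lemma cos_abs_mult: "cos (\<bar>x\<bar> * u) = cos (x * (u::real))"
  by (cases "x \<ge> 0") auto

lemma W_trig: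
  fixes N :: nat and lam :: real
  shows "lam * cos (real N * u) + (\<Sum>j=1..n. a j * cos (real (nat \<bar>2 * int j - int N\<bar>) * u))
    = (Cpoly n a (2*u) + lam) * cos (real N * u) + Spoly n a (2*u) * sin (real N * u)"
proof -
  have "a j * cos (real (nat \<bar>2 * int j - int N\<bar>) * u)
      = a j * cos (real j * (2 * u)) * cos (real N * u) + a j * sin (real j * (2 * u)) * sin (real N * u)"
    for j
  proof -
    have "real (nat \<bar>2 * int j - int N\<bar>) = \<bar>2 * real j - real N\<bar>" by linarith
    then have "cos (real (nat \<bar>2 * int j - int N\<bar>) * u) = cos ((2 * real j - real N) * u)"
      by (simp add: cos_abs_mult)
    also have "(2 * real j - real N) * u = real j * (2 * u) - real N * u" by (simp add: algebra_simps)
    finally show ?thesis by (simp add: cos_diff algebra_simps)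
  qed
  then have "(\<Sum>j=1..n. a j * cos (real (nat \<bar>2 * int j - int N\<bar>) * u))
    = Cpoly n a (2*u) * cos (real N * u) + Spoly n a (2*u) * sin (real N * u)"
    by (simp add: Cpoly_def Spoly_def sum.distrib sum_distrib_right)
  then show ?thesis by (simp add: algebra_simps)
qed

definition Wp :: "nat \<Rightarrow> (nat \<Rightarrow> real) \<Rightarrow> real \<Rightarrow> nat \<Rightarrow> real poly" where
  "Wp n a lam N = smult lam (cheb N) + (\<Sum>j=1..n. smult (a j) (cheb (nat \<bar>2 * int j - int N\<bar>)))"

lemma Wp_cos: "poly (Wp n a lam N) (cos u)
   = lam * cos (real N * u) + (\<Sum>j=1..n. a j * cos (real (nat \<bar>2 * int j - int N\<bar>) * u))"
  by (simp add: Wp_def poly_sum cheb_cos)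

lemma kk_parity: "((-1::real) ^ nat \<bar>2 * int j - int N\<bar>) = (-1) ^ N"
proof -
  have "even (nat \<bar>2 * int j - int N\<bar> + N)"
  proof (cases "2 * j \<ge> N")
    case True
    then have e: "nat \<bar>2 * int j - int N\<bar> + N = 2 * j" by linarith
    show ?thesis unfolding e by simp
  next
    case False
    then have e: "nat \<bar>2 * int j - int N\<bar> + N = 2 * (N - j)" by linarith
    show ?thesis unfolding e by simp
  qed
  then have "((-1::real) ^ (nat \<bar>2 * int j - int N\<bar> + N)) = 1" by simp
  then have "((-1::real) ^ nat \<bar>2 * int j - int N\<bar>) * (-1)^N = 1" by (simp add: power_add)
  moreover have s: "(-1::real)^N * (-1)^N = 1" by (simp flip: power_add)
  ultimately show ?thesis by (metis mult.assoc mult.right_neutral mult.left_neutral)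
qed

lemma Wp_par: "poly (Wp n a lam N) (- x) = (-1)^N * poly (Wp n a lam N) x"
  by (simp add: Wp_def poly_sum cheb_neg kk_parity sum_distrib_left distrib_left mult.left_commute)

lemma Wp_deg:
  assumes "N = Suc n" "lam \<noteq> 0"
  shows "degree (Wp n a lam N) = N" "lead_coeff (Wp n a lam N) = lam * 2^(N-1)"
proof -
  have kk: "nat \<bar>2 * int j - int N\<bar> < N" if "j \<in> {1..n}" for j using that assms(1) by auto
  have d1: "degree (smult (a j) (cheb (nat \<bar>2 * int j - int N\<bar>))) \<le> N" if "j \<in> {1..n}" for j
    using kk[OF that] cheb_lead(1) degree_smult_le by (metis less_imp_le order.trans)
  have c1: "coeff (smult (a j) (cheb (nat \<bar>2 * int j - int N\<bar>))) N = 0" if "j \<in> {1..n}" for j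
    using kk[OF that] cheb_lead(1) by (simp add: coeff_eq_0)
  have dS: "degree (\<Sum>j=1..n. smult (a j) (cheb (nat \<bar>2 * int j - int N\<bar>))) \<le> N"
    by (rule degree_sum_le) (use d1 in auto)
  have dL: "degree (smult lam (cheb N)) \<le> N" using cheb_lead(1)[of N] degree_smult_le by metis
  have dle: "degree (Wp n a lam N) \<le> N" unfolding Wp_def using dS dL degree_add_le by blast
  have s0: "(\<Sum>j=1..n. a j * coeff (cheb (nat \<bar>2 * int j - int N\<bar>)) N) = 0"
    by (rule sum.neutral) (use kk cheb_lead(1) in \<open>auto simp: coeff_eq_0\<close>)
  have "coeff (Wp n a lam N) N = lam * coeff (cheb N) N + (\<Sum>j=1..n. a j * coeff (cheb (nat \<bar>2 * int j - int N\<bar>)) N)"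
    by (simp add: Wp_def coeff_sum)
  then have cN: "coeff (Wp n a lam N) N = lam * 2^(N-1)"
    using s0 cheb_lead[of N] assms(1) by simp
  then have "coeff (Wp n a lam N) N \<noteq> 0" using assms(2) by simp
  then have "degree (Wp n a lam N) \<ge> N" by (simp add: le_degree)
  then show dd: "degree (Wp n a lam N) = N" using dle by simp
  show "lead_coeff (Wp n a lam N) = lam * 2^(N-1)" using cN dd by simp
qed

lemma partA:
  fixes n :: nat and a :: "nat \<Rightarrow> real"
  assumes n1: "n \<ge> 1" and sa: "(\<Sum>j=1..n. a j) = 1"
  shows "\<exists>t. Spoly n a t = 0 \<and> Cpoly n a t \<le> - (tan (pi / (2 * (real n + 1))))\<^sup>2"
proof (rule ccontr)
  define N where "N = Suc n"
  define K where "K = N div 2"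
  define al where "al = pi / (2 * real N)"
  define lam where "lam = (tan al)^2"
  have alN: "pi / (2 * (real n + 1)) = al" by (simp add: al_def N_def)
  assume "\<not> ?thesis"
  then have H: "Cpoly n a t > - lam" if "Spoly n a t = 0" for t
    using that unfolding alN lam_def by force
  have K1: "K \<ge> 1" "2*K \<le> N" "N < 2*K + 2" using n1 by (auto simp: K_def N_def)
  have N2: "real N \<ge> 2" using n1 by (simp add: N_def)
  have al_pos: "0 < al" "al < pi/2"
  proof -
    show "0 < al" using N2 by (simp add: al_def)
    have "pi / (2 * real N) \<le> pi / 4" by (rule divide_left_mono) (use N2 in auto)
    then show "al < pi/2" unfolding al_def using pi_gt_zero by linarith
  qed
  have cpos: "cos al > 0" using al_pos by (simp add: cos_gt_zero)
  have spos: "sin al > 0" using al_pos by (simp add: sin_gt_zero)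
  have lam_pos: "lam > 0" using cpos spos by (simp add: lam_def tan_def)
  define G1 where "G1 u = Cpoly n a (2*u) + lam" for u
  define G2 where "G2 u = Spoly n a (2*u)" for u
  define zz where "zz u = complex_of_real (G1 u) + \<i> * complex_of_real (G2 u)" for u
  define h where "h u = Arg (zz u) - real N * u" for u
  have Rezz: "Re (zz u) = G1 u" and Imzz: "Im (zz u) = G2 u" for u by (simp_all add: zz_def)
  have notneg: "zz u \<notin> \<real>\<^sub>\<le>\<^sub>0" for u
  proof
    assume "zz u \<in> \<real>\<^sub>\<le>\<^sub>0"
    then have "G2 u = 0" "G1 u \<le> 0" by (auto simp: complex_nonpos_Reals_iff Rezz Imzz)
    then show False using H[of "2*u"] by (simp add: G1_def G2_def)
  qed
  have cont: "continuous_on {0..pi/2} h"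
  proof -
    have "continuous_on {0..pi/2} zz"
      unfolding zz_def G1_def G2_def by (intro continuous_intros cont_C cont_S)
    then have cA: "continuous_on {0..pi/2} (\<lambda>u. Arg (zz u))"
      using notneg by (intro continuous_on_Arg') auto
    show ?thesis unfolding h_def by (rule continuous_on_diff[OF cA]) (intro continuous_intros)
  qed
  have Arglt: "Arg (zz u) < pi" for u
  proof -
    have "Arg (zz u) \<noteq> pi" using notneg[of u] by (auto simp: Arg_eq_pi complex_nonpos_Reals_iff)
    then show ?thesis using Arg_le_pi[of "zz u"] by linarith
  qed
  have h0: "h 0 = 0"
  proof -
    have "G1 0 = 1 + lam" "G2 0 = 0" using sa by (simp_all add: G1_def G2_def C_zero S_zero)
    then have "zz 0 = complex_of_real (1 + lam)" by (simp add: zz_def)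
    then show ?thesis using lam_pos unfolding h_def by (simp only: Arg_of_real) simp
  qed
  have hpi2: "h (pi/2) = - (real N * pi / 2)"
  proof -
    have "G1 (pi/2) > 0" using H[of pi] S_pi by (simp add: G1_def)
    moreover have "zz (pi/2) = complex_of_real (G1 (pi/2))" by (simp add: zz_def G2_def S_pi)
    ultimately show ?thesis by (simp add: h_def)
  qed
  define bnd where "bnd m = (if m < K then (2 * real m + 1) * al else pi/2)" for m
  have bnd_le: "bnd m \<le> pi/2" if "m \<in> {1..K}" for m
  proof (cases "m < K")
    case True
    then have "2 * m + 1 \<le> N" using K1 by linarith
    then have "(2 * real m + 1) \<le> real N" by linarith
    then have "(2 * real m + 1) * al \<le> real N * al" using al_pos by (intro mult_right_mono) auto
    also have "real N * al = pi/2" using N2 by (simp add: al_def)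
    finally show ?thesis using True by (simp add: bnd_def)
  qed (simp add: bnd_def)
  have ex: "\<exists>x. 0 < x \<and> x < bnd m \<and> h x = pi/2 - real m * pi" if m: "m \<in> {1..K}" for m
  proof -
    have bpos: "0 < bnd m" using al_pos by (simp add: bnd_def)
    have hb: "h (bnd m) < pi/2 - real m * pi"
    proof (cases "m < K")
      case True
      have "real N * ((2 * real m + 1) * al) = (2 * real m + 1) * pi / 2" using N2 by (simp add: al_def)
      then have "h (bnd m) = Arg (zz (bnd m)) - (2 * real m + 1) * pi / 2" using True by (simp add: h_def bnd_def)
      moreover have "(2 * real m + 1) * pi / 2 = real m * pi + pi/2" by (simp add: algebra_simps)
      ultimately show ?thesis using Arglt[of "bnd m"] by linarith
    next
      case False
      then have "m = K" using m by simp
      then have "2 * real m < real N + 1" using K1 by linarith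
      then have "2 * real m * pi < (real N + 1) * pi" by simp
      then show ?thesis using False hpi2 by (simp add: bnd_def algebra_simps)
    qed
    have h0l: "pi/2 - real m * pi < h 0" using m h0 by simp
    obtain x where x: "0 \<le> x" "x \<le> bnd m" "h x = pi/2 - real m * pi"
      using IVT2'[of h "bnd m" "pi/2 - real m * pi" 0] hb h0l bpos
        continuous_on_subset[OF cont, of "{0..bnd m}"] bnd_le[OF m] by auto
    have "x \<noteq> 0" using x(3) h0l by auto
    moreover have "x \<noteq> bnd m" using x(3) hb by auto
    ultimately have "0 < x \<and> x < bnd m \<and> h x = pi/2 - real m * pi" using x by auto
    then show ?thesis by blast
  qed
  obtain u where u: "\<And>m. m \<in> {1..K} \<Longrightarrow> 0 < u m \<and> u m < bnd m \<and> h (u m) = pi/2 - real m * pi"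
    using ex by metis
  have um: "0 < u m" "u m < pi/2" "h (u m) = pi/2 - real m * pi" if "m \<in> {1..K}" for m
    using u[OF that] bnd_le[OF that] by auto
  define p where "p = Wp n a lam N"
  have pW: "poly p (cos x) = G1 x * cos (real N * x) + G2 x * sin (real N * x)" for x
    unfolding p_def Wp_cos W_trig[of lam N] G1_def G2_def by simp
  have pcos: "poly p (cos x) = cmod (zz x) * cos (h x)" for x
  proof -
    have r: "Re (zz x) = cmod (zz x) * cos (Arg (zz x))" by (metis Re_rcis rcis_cmod_Arg)
    have i: "Im (zz x) = cmod (zz x) * sin (Arg (zz x))" by (metis Im_rcis rcis_cmod_Arg)
    show ?thesis unfolding pW h_def cos_diff using r i by (simp add: Rezz Imzz algebra_simps)
  qed
  have roots: "\<forall>m\<in>{1..K}. poly p (cos (u m)) = 0"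
  proof
    fix m assume m: "m \<in> {1..K}"
    have "cos (pi/2 - real m * pi) = 0" by (simp add: cos_diff)
    then show "poly p (cos (u m)) = 0" using pcos[of "u m"] um[OF m] by simp
  qed
  have vpos: "\<forall>m\<in>{1..K}. cos (u m) > 0" using um by (simp add: cos_gt_zero)
  have inj: "inj_on (\<lambda>m. cos (u m)) {1..K}"
  proof (rule inj_onI)
    fix x y assume xy: "x \<in> {1..K}" "y \<in> {1..K}" "cos (u x) = cos (u y)"
    have "u x = u y"
    proof (rule cos_inj_pi)
      show "0 \<le> u x" "u x \<le> pi" "0 \<le> u y" "u y \<le> pi"
        using um[OF xy(1)] um[OF xy(2)] pi_gt_zero by linarith+
      show "cos (u x) = cos (u y)" using xy(3) .
    qed
    then have "h (u x) = h (u y)" by simp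
    then have "pi/2 - real x * pi = pi/2 - real y * pi" using um(3)[OF xy(1)] um(3)[OF xy(2)] by linarith
    then have "real x * pi = real y * pi" by linarith
    then show "x = y" by simp
  qed
  have degp: "degree p = N" "lead_coeff p = lam * 2^(N-1)"
    using Wp_deg[of N n lam a] lam_pos by (simp_all add: p_def N_def)
  have parp: "\<forall>x. poly p (-x) = (-1)^N * poly p x" unfolding p_def using Wp_par by blast
  have fac: "poly p 1 = lam * 2^(N-1) * (\<Prod>m\<in>{1..K}. 1 - (cos (u m))^2)"
    using sym_roots_poly1[OF _ inj vpos _ degp(1) parp roots] degp(2) by (simp add: K_def)
  have p1: "poly p 1 = 1 + lam"
  proof -
    have "G1 0 = 1 + lam" "G2 0 = 0" using sa by (simp_all add: G1_def G2_def C_zero S_zero)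
    then show ?thesis using pW[of 0] by simp
  qed
  have T: "2^(N-1) * (\<Prod>k<K. 1 - (cos ((2 * real k + 1) * al))^2) = 1"
  proof -
    have "(2 * real k + 1) * al = (2 * real k + 1) * pi / (2 * real N)" for k by (simp add: al_def)
    then show ?thesis using cheb_prod[of N] by (simp add: K_def N_def)
  qed
  have K1': "{1..K} = insert K {1..K-1}" "K \<notin> {1..K-1}" using K1 by auto
  have K0': "{..<K} = insert 0 {1..K-1}" "0 \<notin> {1..K-1}" using K1 by auto
  define P1 where "P1 = (\<Prod>m\<in>{1..K-1}. 1 - (cos (u m))^2)"
  define P2 where "P2 = (\<Prod>m\<in>{1..K-1}. 1 - (cos ((2 * real m + 1) * al))^2)"
  have PW: "(\<Prod>m\<in>{1..K}. 1 - (cos (u m))^2) = (1 - (cos (u K))^2) * P1"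
    unfolding P1_def using K1'(2) by (subst K1'(1)) simp
  have PT: "(\<Prod>k<K. 1 - (cos ((2 * real k + 1) * al))^2) = (1 - (cos al)^2) * P2"
    unfolding P2_def using K0'(2) by (subst K0'(1)) simp
  have fm: "0 \<le> 1 - (cos (u m))^2 \<and> 1 - (cos (u m))^2 \<le> 1 - (cos ((2 * real m + 1) * al))^2"
    if m: "m \<in> {1..K-1}" for m
  proof -
    have mK: "m \<in> {1..K}" "m < K" using m K1 by auto
    have b: "bnd m = (2 * real m + 1) * al" using mK by (simp add: bnd_def)
    have ub: "u m < (2 * real m + 1) * al" "(2 * real m + 1) * al \<le> pi/2"
      using u[OF mK(1)] bnd_le[OF mK(1)] b by auto
    have bpos: "0 \<le> (2 * real m + 1) * al" using al_pos by simp
    have c0: "0 \<le> cos ((2 * real m + 1) * al)" using ub(2) bpos by (intro cos_ge_zero) auto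
    have clt: "cos ((2 * real m + 1) * al) < cos (u m)"
      using um[OF mK(1)] ub bpos pi_gt_zero by (subst cos_mono_less_eq) auto
    have "(cos ((2 * real m + 1) * al))^2 \<le> (cos (u m))^2"
      using c0 clt by (intro power_mono) auto
    moreover have "(cos (u m))^2 \<le> 1" using abs_cos_le_one[of "u m"] by (simp add: abs_square_le_1)
    ultimately show ?thesis by linarith
  qed
  have P1le: "P1 \<le> P2" unfolding P1_def P2_def by (rule prod_mono) (use fm in blast)
  have P1ge: "0 \<le> P1" unfolding P1_def by (rule prod_nonneg) (use fm in blast)
  have P2pos: "0 < P2" unfolding P2_def
  proof (rule prod_pos)
    fix m assume m: "m \<in> {1..K-1}"
    have mK: "m \<in> {1..K}" "m < K" using m K1 by auto
    have ub: "(2 * real m + 1) * al \<le> pi/2" using bnd_le[OF mK(1)] mK by (simp add: bnd_def)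
    have bpos: "0 < (2 * real m + 1) * al" using al_pos by simp
    have "sin ((2 * real m + 1) * al) > 0" using ub bpos pi_gt_zero by (intro sin_gt_zero) auto
    then show "0 < 1 - (cos ((2 * real m + 1) * al))^2" by (simp add: sin_squared_eq[symmetric])
  qed
  have cK: "0 < 1 - (cos (u K))^2" "1 - (cos (u K))^2 < 1"
  proof -
    have KK: "K \<in> {1..K}" using K1 by auto
    have "sin (u K) > 0" using um[OF KK] pi_gt_zero by (intro sin_gt_zero) auto
    then show "0 < 1 - (cos (u K))^2" by (simp add: sin_squared_eq[symmetric])
    have "cos (u K) > 0" using vpos KK by blast
    then show "1 - (cos (u K))^2 < 1" by simp
  qed
  have "(1 - (cos (u K))^2) * P1 \<le> (1 - (cos (u K))^2) * P2"
    using P1le cK by (intro mult_left_mono) auto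
  also have "\<dots> < P2" using cK P2pos by simp
  finally have WP: "(\<Prod>m\<in>{1..K}. 1 - (cos (u m))^2) < P2" using PW by simp
  have lam2: "0 < lam * 2^(N-1)" using lam_pos by simp
  have ineq: "1 + lam < lam * 2^(N-1) * P2"
    using p1 fac WP mult_strict_left_mono[OF WP lam2] by simp
  have T2: "2^(N-1) * (sin al)^2 * P2 = 1"
  proof -
    have "2^(N-1) * (sin al)^2 * P2 = 2^(N-1) * ((1 - (cos al)^2) * P2)" by (simp add: sin_squared_eq)
    also have "\<dots> = 2^(N-1) * (\<Prod>k<K. 1 - (cos ((2 * real k + 1) * al))^2)" using PT by simp
    also have "\<dots> = 1" using T .
    finally show ?thesis .
  qed
  have lamd: "lam = (sin al)^2 / (cos al)^2" by (simp add: lam_def tan_def power_divide)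
  have sc: "(sin al)^2 + (cos al)^2 = 1" by simp
  have "lam * 2^(N-1) * P2 = 1 / (cos al)^2"
  proof -
    have "lam * 2^(N-1) * P2 = (2^(N-1) * (sin al)^2 * P2) / (cos al)^2"
      by (simp add: lamd)
    then show ?thesis using T2 by simp
  qed
  moreover have "1 + lam = 1 / (cos al)^2"
    using cpos sc by (simp add: lamd field_simps)
  ultimately show False using ineq by simp
qed

lemma dir_cos: "2 * (1 - cos x) * (\<Sum>j=1..N. cos (real j * x))
    = cos (real N * x) - cos (real (Suc N) * x) - (1 - cos x)"
proof (induction N)
  case 0 then show ?case by simp
next
  case (Suc N)
  have e: "cos (real (Suc (Suc N)) * x) + cos (real N * x) = 2 * cos x * cos (real (Suc N) * x)"
  proof -
    have a: "real (Suc (Suc N)) * x = real (Suc N) * x + x" by (simp add: algebra_simps)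
    have b: "real N * x = real (Suc N) * x - x" by (simp add: algebra_simps)
    show ?thesis unfolding a b cos_add cos_diff by (simp add: algebra_simps)
  qed
  have "2 * (1 - cos x) * (\<Sum>j=1..Suc N. cos (real j * x))
      = 2 * (1 - cos x) * (\<Sum>j=1..N. cos (real j * x)) + 2 * (1 - cos x) * cos (real (Suc N) * x)"
    by (simp add: algebra_simps)
  also have "\<dots> = cos (real (Suc N) * x) - cos (real (Suc (Suc N)) * x) - (1 - cos x)"
    unfolding Suc.IH using e by (simp add: algebra_simps)
  finally show ?case .
qed

lemma fej_cos: "2 * (1 - cos x) * (\<Sum>j=1..N. (real N - real j) * cos (real j * x))
    = 1 - cos (real N * x) - real N * (1 - cos x)"
proof (induction N)
  case 0 then show ?case by simp
next
  case (Suc N)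
  have "(\<Sum>j=1..Suc N. (real (Suc N) - real j) * cos (real j * x))
      = (\<Sum>j=1..N. (real (Suc N) - real j) * cos (real j * x))"
    by simp
  also have "\<dots> = (\<Sum>j=1..N. (real N - real j) * cos (real j * x)) + (\<Sum>j=1..N. cos (real j * x))"
    by (simp add: sum.distrib[symmetric] algebra_simps)
  finally have s: "(\<Sum>j=1..Suc N. (real (Suc N) - real j) * cos (real j * x))
      = (\<Sum>j=1..N. (real N - real j) * cos (real j * x)) + (\<Sum>j=1..N. cos (real j * x))" .
  show ?case unfolding s distrib_left Suc.IH dir_cos by (simp add: algebra_simps)
qed

lemma dir_sin: "2 * (1 - cos x) * (\<Sum>j=1..N. sin (real j * x))
    = sin x + sin (real N * x) - sin (real (Suc N) * x)"
proof (induction N)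
  case 0 then show ?case by simp
next
  case (Suc N)
  have e: "sin (real (Suc (Suc N)) * x) + sin (real N * x) = 2 * cos x * sin (real (Suc N) * x)"
  proof -
    have a: "real (Suc (Suc N)) * x = real (Suc N) * x + x" by (simp add: algebra_simps)
    have b: "real N * x = real (Suc N) * x - x" by (simp add: algebra_simps)
    show ?thesis unfolding a b sin_add sin_diff by (simp add: algebra_simps)
  qed
  have "2 * (1 - cos x) * (\<Sum>j=1..Suc N. sin (real j * x))
      = 2 * (1 - cos x) * (\<Sum>j=1..N. sin (real j * x)) + 2 * (1 - cos x) * sin (real (Suc N) * x)"
    by (simp add: algebra_simps)
  also have "\<dots> = sin x + sin (real (Suc N) * x) - sin (real (Suc (Suc N)) * x)"
    unfolding Suc.IH using e by (simp add: algebra_simps)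
  finally show ?case .
qed

lemma fej_sin: "2 * (1 - cos x) * (\<Sum>j=1..N. (real N - real j) * sin (real j * x))
    = real N * sin x - sin (real N * x)"
proof (induction N)
  case 0 then show ?case by simp
next
  case (Suc N)
  have "(\<Sum>j=1..Suc N. (real (Suc N) - real j) * sin (real j * x))
      = (\<Sum>j=1..N. (real (Suc N) - real j) * sin (real j * x))"
    by simp
  also have "\<dots> = (\<Sum>j=1..N. (real N - real j) * sin (real j * x)) + (\<Sum>j=1..N. sin (real j * x))"
    by (simp add: sum.distrib[symmetric] algebra_simps)
  finally have s: "(\<Sum>j=1..Suc N. (real (Suc N) - real j) * sin (real j * x))
      = (\<Sum>j=1..N. (real N - real j) * sin (real j * x)) + (\<Sum>j=1..N. sin (real j * x))" .
  show ?case unfolding s distrib_left Suc.IH dir_sin by (simp add: algebra_simps)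
qed

lemma sum_upto_Suc_zero:
  assumes "f (Suc n) = 0"
  shows "(\<Sum>j=1..Suc n. f j) = (\<Sum>j=1..n. f j)"
  using assms by simp

lemma ext_sum:
  assumes "N = Suc n" "th = pi / real N"
  shows "(\<Sum>j=1..n. (real N - real j) * sin (real j * th)) * (2 * (1 - cos th)) = real N * sin th"
proof -
  have "real N * th = pi" using assms by simp
  then have "2 * (1 - cos th) * (\<Sum>j=1..N. (real N - real j) * sin (real j * th)) = real N * sin th"
    using fej_sin[of th N] by simp
  moreover have "(\<Sum>j=1..N. (real N - real j) * sin (real j * th)) = (\<Sum>j=1..n. (real N - real j) * sin (real j * th))"
    using assms(1) by (simp only: sum_upto_Suc_zero) simp
  ultimately show ?thesis by (simp add: algebra_simps)
qed

lemma ext_alt: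
  assumes "N = Suc n" "th = pi / real N"
  shows "(\<Sum>j=1..n. (real N - real j) * sin (real j * th) * cos (real j * pi)) * (2 * (1 + cos th))
     = - real N * sin th"
proof -
  have "real N * th = pi" using assms by simp
  then have e1: "real N * (th + pi) = real (Suc N) * pi" by (simp add: algebra_simps)
  have e2: "sin (real j * (th + pi)) = sin (real j * th) * cos (real j * pi)" for j
    by (simp add: distrib_left sin_add)
  have "2 * (1 - cos (th + pi)) * (\<Sum>j=1..N. (real N - real j) * sin (real j * (th + pi)))
      = real N * sin (th + pi) - sin (real N * (th + pi))"
    by (rule fej_sin)
  then have "2 * (1 + cos th) * (\<Sum>j=1..N. (real N - real j) * (sin (real j * th) * cos (real j * pi)))
      = - real N * sin th"
    unfolding e1 e2 using sin_npi[of "Suc N"] by simp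
  moreover have "(\<Sum>j=1..N. (real N - real j) * (sin (real j * th) * cos (real j * pi)))
      = (\<Sum>j=1..n. (real N - real j) * sin (real j * th) * cos (real j * pi))"
    using assms(1) by (simp only: sum_upto_Suc_zero) (simp add: mult.assoc)
  ultimately show ?thesis by (simp add: algebra_simps)
qed

lemma sin_shift_2pi: "sin (real j * (x + of_int k * 2 * pi)) = sin (real j * x)"
proof -
  have "real j * (x + of_int k * 2 * pi) = real j * x + (2 * pi) * of_int (int j * k)"
    by (simp add: algebra_simps)
  moreover have "cos ((2 * pi) * of_int (int j * k)) = 1" "sin ((2 * pi) * of_int (int j * k)) = 0"
    by (rule cos_int_2pin, rule sin_int_2pin)
  ultimately show ?thesis by (simp only: sin_add)
qed

lemma ext_S:
  assumes NN: "N = Suc n" and th: "th = pi / real N" and n1: "n \<ge> 1"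
  shows "0 \<le> sin t * (\<Sum>j=1..n. (real N - real j) * sin (real j * th) * sin (real j * t))"
proof -
  define F where "F x = (\<Sum>j=1..N. (real N - real j) * cos (real j * x))" for x
  define Sb where "Sb = (\<Sum>j=1..n. (real N - real j) * sin (real j * th) * sin (real j * t))"
  define A where "A = 1 - cos (t - th)"
  define B where "B = 1 - cos (t + th)"
  have Nth: "real N * th = pi" using NN th by simp
  have thp: "0 < th" "th < pi"
  proof -
    have N2: "real N \<ge> 2" using NN n1 by simp
    show "0 < th" using th N2 by simp
    have "pi / real N \<le> pi / 2" by (rule divide_left_mono) (use N2 in auto)
    then show "th < pi" using th pi_gt_zero by linarith
  qed
  have sth: "sin th > 0" using thp by (simp add: sin_gt_zero)
  have Sb_eq: "F (t - th) - F (t + th) = 2 * Sb"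
  proof -
    have "F (t - th) - F (t + th) = (\<Sum>j=1..N. (real N - real j) * (cos (real j * (t - th)) - cos (real j * (t + th))))"
      unfolding F_def by (simp add: sum_subtractf[symmetric] algebra_simps)
    also have "\<dots> = (\<Sum>j=1..N. 2 * ((real N - real j) * sin (real j * th) * sin (real j * t)))"
      by (rule sum.cong) (simp_all add: distrib_left right_diff_distrib cos_add cos_diff algebra_simps)
    also have "\<dots> = (\<Sum>j=1..n. 2 * ((real N - real j) * sin (real j * th) * sin (real j * t)))"
      using NN by (simp only: sum_upto_Suc_zero) simp
    also have "\<dots> = 2 * Sb" unfolding Sb_def by (simp add: sum_distrib_left)
    finally show ?thesis .
  qed
  have FA: "2 * A * F (t - th) = 1 + cos (real N * t) - real N * A"
  proof -
    have "real N * (t - th) = real N * t - pi" using Nth by (simp add: algebra_simps)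
    then have "cos (real N * (t - th)) = - cos (real N * t)" by (simp add: cos_diff)
    then show ?thesis using fej_cos[of "t - th" N] unfolding A_def F_def by simp
  qed
  have FB: "2 * B * F (t + th) = 1 + cos (real N * t) - real N * B"
  proof -
    have "real N * (t + th) = real N * t + pi" using Nth by (simp add: algebra_simps)
    then have "cos (real N * (t + th)) = - cos (real N * t)" by simp
    then show ?thesis using fej_cos[of "t + th" N] unfolding B_def F_def by simp
  qed
  have BA: "B - A = 2 * sin t * sin th" unfolding A_def B_def by (simp add: cos_add cos_diff)
  have key: "4 * A * B * Sb = 2 * sin t * sin th * (1 + cos (real N * t))"
  proof -
    have "4 * A * B * Sb = B * (2 * A * F (t - th)) - A * (2 * B * F (t + th))"
      using Sb_eq by (simp add: algebra_simps)
    also have "\<dots> = (B - A) * (1 + cos (real N * t))" unfolding FA FB by (simp add: algebra_simps)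
    finally show ?thesis using BA by simp
  qed
  have A0: "A \<ge> 0" "B \<ge> 0" unfolding A_def B_def by simp_all
  have pos2: "0 \<le> sin t * sin t * sin th * (1 + cos (real N * t))"
  proof -
    have "0 \<le> sin t * sin t" by simp
    moreover have "0 \<le> 1 + cos (real N * t)" using cos_ge_minus_one[of "real N * t"] by linarith
    ultimately show ?thesis using sth by simp
  qed
  have sqs: "0 \<le> (\<Sum>j=1..n. (real N - real j) * sin (real j * th) * sin (real j * th))"
  proof (rule sum_nonneg)
    fix j assume j: "j \<in> {1..n}"
    have "0 \<le> real N - real j" using j NN by simp
    moreover have "0 \<le> sin (real j * th) * sin (real j * th)" by simp
    ultimately show "0 \<le> (real N - real j) * sin (real j * th) * sin (real j * th)"
      by (simp add: mult.assoc)
  qed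
  consider "A = 0" | "B = 0" | "A > 0 \<and> B > 0" using A0 by linarith
  then show ?thesis
  proof cases
    case 1
    then have "cos (t - th) = 1" by (simp add: A_def)
    then obtain k :: int where k: "t - th = of_int k * 2 * pi" using cos_one_2pi_int by blast
    then have tt: "t = th + of_int k * 2 * pi" by simp
    have "sin (real j * t) = sin (real j * th)" for j unfolding tt by (rule sin_shift_2pi)
    moreover have "sin t = sin th" using sin_shift_2pi[of 1 th k] tt by simp
    ultimately show ?thesis using sth sqs by simp
  next
    case 2
    then have "cos (t + th) = 1" by (simp add: B_def)
    then obtain k :: int where k: "t + th = of_int k * 2 * pi" using cos_one_2pi_int by blast
    then have tt: "t = - th + of_int k * 2 * pi" by simp
    have "sin (real j * t) = - sin (real j * th)" for j
      unfolding tt using sin_shift_2pi[of j "- th" k] by simp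
    moreover have "sin t = - sin th" using sin_shift_2pi[of 1 "- th" k] tt by simp
    ultimately show ?thesis using sth sqs by (simp add: sum_negf)
  next
    case 3
    have "4 * A * B * (sin t * Sb) = sin t * (4 * A * B * Sb)" by (simp add: algebra_simps)
    also have "\<dots> = sin t * (2 * sin t * sin th * (1 + cos (real N * t)))" unfolding key ..
    also have "\<dots> = sin t * sin t * sin th * (1 + cos (real N * t)) * 2" by (simp add: algebra_simps)
    finally have e: "4 * A * B * (sin t * Sb) = sin t * sin t * sin th * (1 + cos (real N * t)) * 2" .
    have "0 \<le> (4 * A * B) * (sin t * Sb)" unfolding e using pos2 by simp
    moreover have "0 < 4 * A * B" using 3 by simp
    ultimately show ?thesis unfolding Sb_def by (simp add: zero_le_mult_iff)
  qed
qed

lemma cos_j_of_cos: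
  assumes "sin t = 0"
  shows "cos (real j * t) = 1 \<and> cos t = 1 \<or> cos (real j * t) = cos (real j * pi) \<and> cos t = -1"
proof -
  have "(cos t)^2 = 1" using assms sin_squared_eq[of t] by simp
  then have "cos t = 1 \<or> cos t = -1" by (simp add: power2_eq_1_iff)
  then show ?thesis
  proof
    assume c: "cos t = 1"
    have "cos (real j * t) = poly (cheb j) (cos t)" by (simp add: cheb_cos)
    then show ?thesis using c cheb_one by simp
  next
    assume c: "cos t = -1"
    have "cos (real j * t) = poly (cheb j) (cos t)" by (simp add: cheb_cos)
    also have "\<dots> = poly (cheb j) (cos pi)" using c by simp
    also have "\<dots> = cos (real j * pi)" by (rule cheb_cos)
    finally show ?thesis using c by simp
  qed
qed

lemma tan_sq_half:
  assumes "cos (x/2) \<noteq> 0"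
  shows "(tan (x/2))^2 * (1 + cos x) = 1 - cos x"
proof -
  have c: "cos x = (cos (x/2))^2 - (sin (x/2))^2" using cos_double[of "x/2"] by simp
  have sc: "(sin (x/2))^2 + (cos (x/2))^2 = 1" by simp
  show ?thesis using assms unfolding c tan_def
    by (simp add: power_divide field_simps) (use sc in algebra)
qed

lemma partB:
  fixes n :: nat and ep :: real
  assumes n1: "n \<ge> 1" and e: "0 < ep" "ep < 1"
  shows "\<exists>a. (\<Sum>j=1..n. a j) = 1 \<and>
           min_C_on_zeros n a \<ge> - (1 - ep) * (tan (pi / (2 * (real n + 1))))\<^sup>2 - ep"
proof -
  define N where "N = Suc n"
  define th where "th = pi / real N"
  define lam where "lam = (tan (pi / (2 * (real n + 1))))\<^sup>2"
  define b where "b j = (real N - real j) * sin (real j * th)" for j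
  define B where "B = (\<Sum>j=1..n. b j)"
  have N2: "real N \<ge> 2" using n1 by (simp add: N_def)
  have thp: "0 < th" "th < pi"
  proof -
    show "0 < th" using th_def N2 by simp
    have "pi / real N \<le> pi / 2" by (rule divide_left_mono) (use N2 in auto)
    then show "th < pi" using th_def pi_gt_zero by linarith
  qed
  have sth: "sin th > 0" using thp by (simp add: sin_gt_zero)
  have cth: "cos th < 1" "-1 < cos th"
  proof -
    have "cos th < cos 0" using thp by (subst cos_mono_less_eq) auto
    then show "cos th < 1" by simp
    have "cos pi < cos th" using thp by (subst cos_mono_less_eq) auto
    then show "-1 < cos th" by simp
  qed
  have hB: "B * (2 * (1 - cos th)) = real N * sin th"
    unfolding B_def b_def by (rule ext_sum) (simp_all add: N_def th_def)
  have Bpos: "B > 0"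
  proof -
    have "0 < B * (2 * (1 - cos th))" using hB sth N2 by simp
    moreover have "0 < 2 * (1 - cos th)" using cth by simp
    ultimately show ?thesis by (simp add: zero_less_mult_iff)
  qed
  have halt: "(\<Sum>j=1..n. b j * cos (real j * pi)) * (2 * (1 + cos th)) = - real N * sin th"
    unfolding b_def by (rule ext_alt) (simp_all add: N_def th_def)
  have lamth: "lam * (1 + cos th) = 1 - cos th"
  proof -
    have e: "pi / (2 * (real n + 1)) = th / 2" by (simp add: th_def N_def)
    have cnz: "cos (th/2) \<noteq> 0"
    proof -
      have "0 < th/2" "th/2 < pi/2" using thp by auto
      then show ?thesis using cos_gt_zero by fastforce
    qed
    show ?thesis unfolding lam_def e by (rule tan_sq_half[OF cnz])
  qed
  have alt: "(\<Sum>j=1..n. b j * cos (real j * pi)) = - lam * B"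
  proof -
    have "(\<Sum>j=1..n. b j * cos (real j * pi)) * (2 * (1 + cos th)) = - B * (2 * (1 - cos th))"
      using halt hB by simp
    also have "\<dots> = - B * (2 * (lam * (1 + cos th)))" using lamth by simp
    also have "\<dots> = (- lam * B) * (2 * (1 + cos th))" by (simp add: algebra_simps)
    finally have eq: "(\<Sum>j=1..n. b j * cos (real j * pi)) * (2 * (1 + cos th)) = (- lam * B) * (2 * (1 + cos th))" .
    have nz: "2 * (1 + cos th) \<noteq> 0" using cth by simp
    show ?thesis using mult_right_cancel[OF nz] eq by blast
  qed
  have lampos: "lam \<ge> 0" by (simp add: lam_def)
  define a where "a j = (1 - ep) / B * b j + (if j = 1 then ep else 0)" for j
  have suma: "(\<Sum>j=1..n. a j) = 1"
  proof -
    have "(\<Sum>j=1..n. a j) = (1 - ep) / B * B + (\<Sum>j=1..n. (if j = 1 then ep else 0))"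
      by (simp add: a_def sum.distrib sum_distrib_left B_def)
    also have "(\<Sum>j=1..n. (if j = 1 then ep else 0)) = ep" using n1 by (simp add: sum.delta)
    finally show ?thesis using Bpos by simp
  qed
  have Sa: "Spoly n a t = (1 - ep) / B * (\<Sum>j=1..n. b j * sin (real j * t)) + ep * sin t" for t
  proof -
    have "Spoly n a t = (\<Sum>j=1..n. (1 - ep) / B * (b j * sin (real j * t)) + (if j = 1 then ep * sin (real j * t) else 0))"
      unfolding Spoly_def a_def by (rule sum.cong) (auto simp: algebra_simps)
    also have "\<dots> = (\<Sum>j=1..n. (1 - ep) / B * (b j * sin (real j * t))) + (\<Sum>j=1..n. (if j = 1 then ep * sin (real j * t) else 0))"
      by (rule sum.distrib)
    also have "(\<Sum>j=1..n. (if j = 1 then ep * sin (real j * t) else 0)) = ep * sin t" using n1 by (simp add: sum.delta)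
    finally show ?thesis by (simp add: sum_distrib_left)
  qed
  have Ca_pi: "(\<Sum>j=1..n. a j * cos (real j * pi)) = - (1 - ep) * lam - ep"
  proof -
    have "(\<Sum>j=1..n. a j * cos (real j * pi)) = (\<Sum>j=1..n. (1 - ep) / B * (b j * cos (real j * pi)) + (if j = 1 then ep * cos (real j * pi) else 0))"
      unfolding a_def by (rule sum.cong) (auto simp: algebra_simps)
    also have "\<dots> = (\<Sum>j=1..n. (1 - ep) / B * (b j * cos (real j * pi))) + (\<Sum>j=1..n. (if j = 1 then ep * cos (real j * pi) else 0))"
      by (rule sum.distrib)
    also have "(\<Sum>j=1..n. (if j = 1 then ep * cos (real j * pi) else 0)) = - ep" using n1 by (simp add: sum.delta)
    also have "(\<Sum>j=1..n. (1 - ep) / B * (b j * cos (real j * pi))) = (1 - ep) / B * (\<Sum>j=1..n. b j * cos (real j * pi))"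
      by (rule sum_distrib_left[symmetric])
    also have "\<dots> = (1 - ep) / B * (- lam * B)" unfolding alt ..
    finally have X: "(\<Sum>j=1..n. a j * cos (real j * pi)) = (1 - ep) / B * (- lam * B) + - ep" .
    have q: "(1 - ep) / B * (- lam * B) = - (1 - ep) * lam" using Bpos by (simp add: field_simps)
    show ?thesis using X q by linarith
  qed
  have zer: "Cpoly n a t \<ge> - (1 - ep) * lam - ep" if "Spoly n a t = 0" for t
  proof -
    have "0 \<le> sin t * (\<Sum>j=1..n. b j * sin (real j * t))"
      using ext_S[of N n th t] n1 by (simp add: N_def th_def b_def)
    then have "0 \<le> (1 - ep) / B * (sin t * (\<Sum>j=1..n. b j * sin (real j * t)))"
      using Bpos e by simp
    moreover have "sin t * Spoly n a t = (1 - ep) / B * (sin t * (\<Sum>j=1..n. b j * sin (real j * t))) + ep * (sin t)^2"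
      unfolding Sa by (simp add: algebra_simps power2_eq_square)
    ultimately have "ep * (sin t)^2 \<le> 0" using that by simp
    then have "sin t = 0" using e by (simp add: mult_le_0_iff)
    then have cs: "\<And>j. cos (real j * t) = 1 \<and> cos t = 1 \<or> cos (real j * t) = cos (real j * pi) \<and> cos t = -1"
      using cos_j_of_cos by blast
    show ?thesis
    proof (cases "cos t = 1")
      case True
      then have "\<And>j. cos (real j * t) = 1" using cs by force
      then have "Cpoly n a t = 1" using suma by (simp add: Cpoly_def)
      moreover have "0 \<le> (1 - ep) * lam" using e lampos by simp
      ultimately show ?thesis using e by linarith
    next
      case False
      then have "\<And>j. cos (real j * t) = cos (real j * pi)" using cs by force
      then have "Cpoly n a t = (\<Sum>j=1..n. a j * cos (real j * pi))" by (simp add: Cpoly_def)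
      then show ?thesis using Ca_pi by simp
    qed
  qed
  have "min_C_on_zeros n a \<ge> - (1 - ep) * lam - ep"
    unfolding min_C_on_zeros_def
  proof (rule cInf_greatest)
    show "{Cpoly n a t |t. Spoly n a t = 0} \<noteq> {}" using S_zero by blast
  next
    fix x assume "x \<in> {Cpoly n a t |t. Spoly n a t = 0}"
    then show "- (1 - ep) * lam - ep \<le> x" using zer by blast
  qed
  then show ?thesis using suma unfolding lam_def by blast
qed

lemma bdd_C: "bdd_below {Cpoly n a t | t. Spoly n a t = 0}"
proof (rule bdd_belowI)
  fix x assume "x \<in> {Cpoly n a t | t. Spoly n a t = 0}"
  then obtain t where x: "x = Cpoly n a t" by blast
  have "(\<Sum>j=1..n. - \<bar>a j\<bar>) \<le> (\<Sum>j=1..n. a j * cos (real j * t))"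
  proof (rule sum_mono)
    fix j
    have "\<bar>a j * cos (real j * t)\<bar> \<le> \<bar>a j\<bar>"
      using abs_cos_le_one[of "real j * t"] by (simp add: abs_mult mult_left_le)
    then show "- \<bar>a j\<bar> \<le> a j * cos (real j * t)" by linarith
  qed
  then show "(\<Sum>j=1..n. - \<bar>a j\<bar>) \<le> x" by (simp add: x Cpoly_def)
qed

theorem theorem1:
  fixes n :: nat
  assumes "n \<ge> 1"
  shows "Sup {min_C_on_zeros n a | a. (\<Sum>j=1..n. a j) = 1}
           = - (tan (pi / (2 * (real n + 1))))\<^sup>2"
proof -
  define lam where "lam = (tan (pi / (2 * (real n + 1))))\<^sup>2"
  define X where "X = {min_C_on_zeros n a | a. (\<Sum>j=1..n. a j) = 1}"
  have lampos: "lam \<ge> 0" by (simp add: lam_def)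
  have up: "x \<le> - lam" if xX: "x \<in> X" for x
  proof -
    obtain a where a: "(\<Sum>j=1..n. a j) = 1" "x = min_C_on_zeros n a" using xX X_def by blast
    obtain t where t: "Spoly n a t = 0" "Cpoly n a t \<le> - lam" using partA[OF assms a(1)] lam_def by blast
    have "min_C_on_zeros n a \<le> Cpoly n a t"
      unfolding min_C_on_zeros_def by (rule cInf_lower) (use t bdd_C in auto)
    then show ?thesis using a t by simp
  qed
  have ne: "X \<noteq> {}"
  proof -
    have "(\<Sum>j=1..n. (if j = 1 then 1 else 0::real)) = 1" using assms by (simp add: sum.delta)
    then show ?thesis unfolding X_def by blast
  qed
  have bdd: "bdd_above X" using up by (intro bdd_aboveI) blast
  have le: "Sup X \<le> - lam" using ne up by (intro cSup_least) auto
  have ge: "Sup X \<ge> - lam"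
  proof (rule ccontr)
    assume "\<not> Sup X \<ge> - lam"
    define d where "d = - lam - Sup X"
    then have d: "0 < d" using \<open>\<not> Sup X \<ge> - lam\<close> by simp
    define ep where "ep = min (1/2) (d / 2)"
    have ep: "0 < ep" "ep < 1" "ep < d"
    proof -
      show "0 < ep" "ep < 1" using d by (auto simp: ep_def)
      have "ep \<le> d / 2" unfolding ep_def by (rule min.cobounded2)
      then show "ep < d" using d by linarith
    qed
    obtain a where a: "(\<Sum>j=1..n. a j) = 1" "min_C_on_zeros n a \<ge> - (1 - ep) * lam - ep"
      using partB[OF assms ep(1,2)] lam_def by blast
    have "min_C_on_zeros n a \<in> X" using a(1) X_def by blast
    then have "min_C_on_zeros n a \<le> Sup X" using bdd by (rule cSup_upper)
    moreover have "- (1 - ep) * lam - ep \<ge> - lam - ep" using lampos ep by (simp add: algebra_simps)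
    ultimately show False using a(2) ep(3) d_def by linarith
  qed
  show ?thesis using le ge unfolding X_def lam_def by simp
qed
end
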